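(* Let $f$ be a Bernstein function, $\alpha\in(0,1)$, $\beta\in(1,1/\alpha]$, $\theta\in(0,\pi/2)$ and $\lambda\in\Sigma_\theta$. Define $g,h:\mathbb{C}_+\to\mathbb{C}$ by $g(z)=f(z^\alpha)^\beta$ and $h(z)=\frac{1}{\lambda+g(z)}$. Then $h\in\mathcal{B}$ and $\|h\|_{\mathcal{B}}\le C|\lambda|^{-1}$, where \[C=2\beta\sec(\alpha\pi/2)\sec^2\big((\alpha\beta\pi/2+\theta)/2\big).\]
   Context: $\mathbb{C}_+=\{\Re z>0\}$, $\Sigma_\theta=\{z\ne0:|\arg z|<\theta\}$; powers use principal branches. A Bernstein function is $f(z)=a+bz+\int_{(0,\infty)}(1-e^{-zs})\,d\mu(s)$ on $\mathbb{C}_+$, with $a,b\ge0$ and $\mu$ a positive Borel measure on $(0,\infty)$ with $\int\frac{s}{1+s}d\mu(s)<\infty$ (it maps $\mathbb{C}_+$ into $\mathbb{C}_+$). $\mathcal{B}$ is the space of holomorphic $f$ on $\mathbb{C}_+$ with $\int_0^\infty\sup_{y}|f'(x+iy)|dx<\infty$, normed by $\|f\|_{\mathcal{B}}=\sup_{\mathbb{C}_+}|f|+\int_0^\infty\sup_{y\in\mathbb{R}}|f'(x+iy)|\,dx$. *)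

theory Defs
  imports "HOL-Complex_Analysis.Complex_Analysis"
begin

definition bernstein :: "(complex \<Rightarrow> complex) \<Rightarrow> bool" where
  "bernstein f \<longleftrightarrow> (\<exists>(a::real) (b::real) (\<mu>::real measure).
      a \<ge> 0 \<and> b \<ge> 0 \<and> sets \<mu> = sets borel \<and>
      (\<integral>\<^sup>+ s. ennreal (s / (1 + s)) * indicator {0<..} s \<partial>\<mu>) < \<infinity> \<and>
      (\<forall>z. Re z > 0 \<longrightarrow>
         f z = complex_of_real a + complex_of_real b * z
               + (LINT s:{0<..}|\<mu>. (1 - exp (- (z * complex_of_real s))))))"

definition B_int :: "(complex \<Rightarrow> complex) \<Rightarrow> ennreal" where
  "B_int h = (\<integral>\<^sup>+ x. (SUP y::real. ennreal (norm (deriv h (Complex x y))))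
                       * indicator {0<..} x \<partial>lborel)"

definition in_B :: "(complex \<Rightarrow> complex) \<Rightarrow> bool" where
  "in_B h \<longleftrightarrow> h holomorphic_on {z. Re z > 0} \<and> B_int h < \<infinity>"

definition B_norm :: "(complex \<Rightarrow> complex) \<Rightarrow> ennreal" where
  "B_norm h = (SUP z\<in>{z. Re z > 0}. ennreal (norm (h z))) + B_int h"

end

theory Submission
  imports Defs
begin

lemma exp_diff_bound:
  fixes u v :: complex and s c :: real
  assumes s: "0 \<le> s" and u: "c \<le> Re u" and v: "c \<le> Re v"
  shows "norm (exp (- (u * of_real s)) - exp (- (v * of_real s))) \<le> s * exp (- (c * s)) * norm (u - v)"
proof (rule field_differentiable_bound[where f="\<lambda>z. exp (- (z * of_real s))"
      and f'="\<lambda>z. - (of_real s * exp (- (z * of_real s)))" and S="{z. c \<le> Re z}"])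
  show "convex {z. c \<le> Re z}" by (rule convex_halfspace_Re_ge)
  fix z assume z: "z \<in> {z. c \<le> Re z}"
  show "((\<lambda>z. exp (- (z * of_real s))) has_field_derivative - (of_real s * exp (- (z * of_real s)))) (at z within {z. c \<le> Re z})"
    by (auto intro!: derivative_eq_intros)
  have "norm (- (of_real s * exp (- (z * of_real s)))) = s * exp (- (Re z * s))"
    using s by (simp add: norm_mult norm_exp_eq_Re)
  also have "\<dots> \<le> s * exp (- (c * s))"
    using z s by (intro mult_left_mono) (auto intro: mult_right_mono)
  finally show "norm (- (of_real s * exp (- (z * of_real s)))) \<le> s * exp (- (c * s))" .
qed (use u v in auto)

lemma one_minus_exp_bound:
  fixes u :: complex assumes "0 \<le> Re u"
  shows "norm (1 - exp (- u)) \<le> norm u"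
  using exp_diff_bound[of 1 0 u 0] assms by (simp add: norm_minus_commute)

lemma one_minus_exp_bound2:
  fixes u :: complex assumes "0 \<le> Re u"
  shows "norm (1 - exp (- u)) \<le> 2"
proof -
  have "norm (exp (- u)) \<le> 1" using assms by (simp add: norm_exp_eq_Re)
  then show ?thesis by (smt (verit) norm_one norm_triangle_ineq4)
qed

lemma s_exp_bound:
  fixes s k :: real assumes "0 \<le> s" "0 < k"
  shows "s * exp (- (k * s)) \<le> (1 + 1 / k) * (s / (1 + s))"
proof -
  have e: "exp (- (k * s)) \<le> 1" using assms by simp
  have "1 + k * s \<le> exp (k * s)" by (rule exp_ge_add_one_self)
  hence "k * s \<le> exp (k * s)" by linarith
  hence "k * s * exp (- (k * s)) \<le> 1" by (simp add: exp_minus field_simps)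
  hence e2: "s * exp (- (k * s)) \<le> 1 / k" using assms by (simp add: field_simps)
  have "s * exp (- (k * s)) * (1 + s) = s * exp (- (k * s)) + s * (s * exp (- (k * s)))"
    by (simp add: algebra_simps)
  also have "\<dots> \<le> s + s * (1 / k)"
  proof (rule add_mono)
    show "s * exp (- (k * s)) \<le> s" using mult_left_mono[OF e, of s] assms by simp
    show "s * (s * exp (- (k * s))) \<le> s * (1 / k)" using mult_left_mono[OF e2, of s] assms by simp
  qed
  also have "\<dots> = (1 + 1/k) * s" by (simp add: algebra_simps)
  finally have "s * exp (- (k * s)) * (1 + s) \<le> (1 + 1/k) * s" .
  hence "s * exp (- (k * s)) \<le> (1 + 1/k) * s / (1 + s)" using assms by (simp add: pos_le_divide_eq)
  thus ?thesis by simp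
qed

lemma one_minus_exp_bound3:
  fixes w :: complex and s :: real assumes "0 \<le> Re w" "0 < s"
  shows "norm (1 - exp (- (w * of_real s))) \<le> 2 * (2 + norm w) * (s / (1 + s))"
proof (cases "s \<le> 1")
  case True
  have "norm (1 - exp (- (w * of_real s))) \<le> norm w * s"
    using one_minus_exp_bound[of "w * of_real s"] assms by (simp add: norm_mult)
  also have "\<dots> \<le> 2 * (2 + norm w) * (s / (1 + s))"
  proof -
    have "norm w * s \<le> (2 + norm w) * s" using assms by (intro mult_right_mono) auto
    also have "\<dots> \<le> 2 * (2 + norm w) * (s / (1 + s))"
    proof -
      have "(2 + norm w) * s * (1 + s) \<le> (2 + norm w) * s * 2"
        by (rule mult_left_mono) (use True assms in auto)
      thus ?thesis using assms by (simp add: field_simps)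
    qed
    finally show ?thesis .
  qed
  finally show ?thesis .
next
  case False
  have "norm (1 - exp (- (w * of_real s))) \<le> 2"
    using one_minus_exp_bound2[of "w * of_real s"] assms by simp
  also have "\<dots> \<le> 2 * (2 + norm w) * (s / (1 + s))"
  proof -
    have "1 \<le> 2 * (s / (1 + s))" using False by (simp add: field_simps)
    hence "2 \<le> 2 * (2 * (s / (1 + s)))" by simp
    also have "\<dots> \<le> (2 + norm w) * (2 * (s / (1 + s)))"
      using False by (intro mult_right_mono) auto
    finally show ?thesis by (simp add: algebra_simps add_divide_distrib)
  qed
  finally show ?thesis .
qed

locale bern =
  fixes a b :: real and \<mu> :: "real measure"
  assumes a_nn: "0 \<le> a" and b_nn: "0 \<le> b" and sets_mu[measurable_cong]: "sets \<mu> = sets borel"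
    and fin: "(\<integral>\<^sup>+ s. ennreal (s / (1 + s)) * indicator {0<..} s \<partial>\<mu>) < \<infinity>"
begin

definition rho :: "real \<Rightarrow> real" where "rho s = indicator {0<..} s * (s / (1 + s))"
definition kern :: "complex \<Rightarrow> real \<Rightarrow> complex" where
  "kern w s = indicator {0<..} s *\<^sub>R (1 - exp (- (w * of_real s)))"
definition kern1 :: "complex \<Rightarrow> real \<Rightarrow> complex" where
  "kern1 w s = indicator {0<..} s *\<^sub>R (of_real s * exp (- (w * of_real s)))"
definition "I w = integral\<^sup>L \<mu> (kern w)"
definition "I1 w = integral\<^sup>L \<mu> (kern1 w)"
definition "F w = of_real a + of_real b * w + I w"
definition "F1 w = of_real b + I1 w"

lemma F_eq: "F w = complex_of_real a + complex_of_real b * w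
   + (LINT s:{0<..}|\<mu>. (1 - exp (- (w * complex_of_real s))))"
  by (simp add: F_def I_def kern_def[abs_def] set_lebesgue_integral_def)

lemma rho_meas[measurable]: "rho \<in> borel_measurable \<mu>"
  unfolding rho_def by measurable

lemma kern_meas[measurable]: "kern w \<in> borel_measurable \<mu>"
  unfolding kern_def by measurable

lemma kern1_meas[measurable]: "kern1 w \<in> borel_measurable \<mu>"
  unfolding kern1_def by measurable

lemma rho_nn: "0 \<le> rho s"
  by (auto simp: rho_def indicator_def)

lemma rho_int: "integrable \<mu> rho"
proof (rule integrableI_nonneg)
  show "AE x in \<mu>. 0 \<le> rho x" by (simp add: rho_nn)
  have "(\<integral>\<^sup>+ x. ennreal (rho x) \<partial>\<mu>) = (\<integral>\<^sup>+ s. ennreal (s / (1 + s)) * indicator {0<..} s \<partial>\<mu>)"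
    by (intro nn_integral_cong) (auto simp: rho_def indicator_def)
  with fin show "(\<integral>\<^sup>+ x. ennreal (rho x) \<partial>\<mu>) < \<infinity>" by simp
qed simp

lemma kern_bound: "0 \<le> Re w \<Longrightarrow> norm (kern w s) \<le> 2 * (2 + norm w) * rho s"
  using one_minus_exp_bound3[of w s] by (auto simp: kern_def rho_def indicator_def)

lemma kern_int: "0 \<le> Re w \<Longrightarrow> integrable \<mu> (kern w)"
proof (rule Bochner_Integration.integrable_bound[of \<mu> "\<lambda>s. 2 * (2 + norm w) * rho s"])
  show "integrable \<mu> (\<lambda>s. 2 * (2 + norm w) * rho s)" using rho_int by simp
qed (auto intro!: AE_I2 order.trans[OF kern_bound] simp: rho_nn)

lemma kern1_bound: "0 < c \<Longrightarrow> c \<le> Re w \<Longrightarrow> norm (kern1 w s) \<le> (1 + 1 / c) * rho s"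
proof (cases "0 < s")
  case True
  assume c: "0 < c" "c \<le> Re w"
  have "norm (kern1 w s) = s * exp (- (Re w * s))"
    using True by (simp add: kern1_def norm_mult norm_exp_eq_Re)
  also have "\<dots> \<le> s * exp (- (c * s))"
    using True c by (intro mult_left_mono) (auto intro: mult_right_mono)
  also have "\<dots> \<le> (1 + 1 / c) * (s / (1 + s))" using s_exp_bound[of s c] True c by simp
  finally show ?thesis using True by (simp add: rho_def)
qed (auto simp: kern1_def rho_def)

lemma kern1_int: "0 < Re w \<Longrightarrow> integrable \<mu> (kern1 w)"
proof (rule Bochner_Integration.integrable_bound[of \<mu> "\<lambda>s. (1 + 1 / Re w) * rho s"])
  show "integrable \<mu> (\<lambda>s. (1 + 1 / Re w) * rho s)" using rho_int by simp
qed (auto intro!: AE_I2 order.trans[OF kern1_bound] simp: rho_nn)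

lemma I_deriv:
  assumes w: "0 < Re w"
  shows "(I has_field_derivative I1 w) (at w)"
proof -
  define r where "r = Re w / 2"
  have r: "0 < r" using w by (simp add: r_def)
  have "((\<lambda>y. (I y - I w) / (y - w)) \<longlongrightarrow> I1 w) (at w within ball w r)"
  proof (subst tendsto_at_iff_sequentially, intro allI impI)
    fix X assume X: "\<forall>i. X i \<in> ball w r - {w}" and lim: "X \<longlonglongrightarrow> w"
    have ReX: "r \<le> Re (X i)" for i
    proof -
      have "\<bar>Re (X i) - Re w\<bar> \<le> norm (X i - w)" using abs_Re_le_cmod[of "X i - w"] by simp
      also have "\<dots> < r" using X by (auto simp: dist_norm norm_minus_commute)
      finally have "\<bar>Re (X i) - Re w\<bar> < r" .
      thus ?thesis unfolding r_def abs_less_iff by linarith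
    qed
    have Xne: "X i \<noteq> w" for i using X by auto
    have Xat: "filterlim X (at w) sequentially"
      by (rule filterlim_atI[OF lim]) (simp add: Xne)
    define q where "q i s = (kern (X i) s - kern w s) / (X i - w)" for i s
    have eq: "(I (X i) - I w) / (X i - w) = integral\<^sup>L \<mu> (q i)" for i
    proof -
      have i1: "integrable \<mu> (kern (X i))" using ReX[of i] r by (intro kern_int) auto
      have i2: "integrable \<mu> (kern w)" using w by (intro kern_int) auto
      show ?thesis unfolding q_def I_def by (simp add: Bochner_Integration.integral_diff[OF i1 i2])
    qed
    have "(\<lambda>i. integral\<^sup>L \<mu> (q i)) \<longlonglongrightarrow> integral\<^sup>L \<mu> (kern1 w)"
    proof (rule integral_dominated_convergence[where w="\<lambda>s. (1 + 1 / r) * rho s"])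
      show "q i \<in> borel_measurable \<mu>" for i
        unfolding q_def by (intro borel_measurable_divide borel_measurable_diff kern_meas borel_measurable_const)
      show "kern1 w \<in> borel_measurable \<mu>" by measurable
      show "integrable \<mu> (\<lambda>s. (1 + 1 / r) * rho s)" using rho_int by simp
      show "AE s in \<mu>. (\<lambda>i. q i s) \<longlonglongrightarrow> kern1 w s"
      proof (rule AE_I2)
        fix s :: real
        show "(\<lambda>i. q i s) \<longlonglongrightarrow> kern1 w s"
        proof (cases "0 < s")
          case True
          define G :: "complex \<Rightarrow> complex" where "G y = - exp (- (y * of_real s))" for y
          have "(G has_field_derivative of_real s * exp (- (w * of_real s))) (at w)"
            unfolding G_def by (auto intro!: derivative_eq_intros)
          hence "((\<lambda>y. (G y - G w) / (y - w)) \<longlongrightarrow> of_real s * exp (- (w * of_real s))) (at w)"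
            by (simp add: has_field_derivative_iff)
          hence "((\<lambda>y. (G y - G w) / (y - w)) \<circ> X) \<longlonglongrightarrow> of_real s * exp (- (w * of_real s))"
            unfolding comp_def by (rule filterlim_compose) (use Xat in simp)
          moreover have "((\<lambda>y. (G y - G w) / (y - w)) \<circ> X) = (\<lambda>i. q i s)"
          proof
            fix i
            show "((\<lambda>y. (G y - G w) / (y - w)) \<circ> X) i = q i s"
              using True unfolding q_def G_def kern_def comp_def by (simp add: algebra_simps)
          qed
          ultimately show ?thesis using True by (simp add: kern1_def)
        qed (simp add: q_def kern_def kern1_def)
      qed
      show "AE s in \<mu>. norm (q i s) \<le> (1 + 1 / r) * rho s" for i
      proof (rule AE_I2)
        fix s :: real
        show "norm (q i s) \<le> (1 + 1 / r) * rho s"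
        proof (cases "0 < s")
          case True
          have rw: "r \<le> Re w" using r by (simp add: r_def)
          have "norm (kern (X i) s - kern w s) = norm (exp (- (w * of_real s)) - exp (- (X i * of_real s)))"
            using True by (simp add: kern_def norm_minus_commute)
          also have "\<dots> \<le> s * exp (- (r * s)) * norm (w - X i)"
            by (rule exp_diff_bound) (use True rw ReX in auto)
          finally have "norm (q i s) \<le> s * exp (- (r * s))"
            using Xne[of i] by (simp add: q_def norm_divide norm_minus_commute divide_le_eq)
          also have "\<dots> \<le> (1 + 1 / r) * (s / (1 + s))" using s_exp_bound[of s r] True r by simp
          finally show ?thesis using True by (simp add: rho_def)
        qed (simp add: q_def kern_def rho_def)
      qed
    qed
    thus "((\<lambda>y. (I y - I w) / (y - w)) \<circ> X) \<longlonglongrightarrow> I1 w"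
      using eq by (simp add: comp_def I1_def)
  qed
  moreover have "at w within ball w r = at w" by (rule at_within_open) (use r in auto)
  ultimately have "((\<lambda>y. (I y - I w) / (y - w)) \<longlongrightarrow> I1 w) (at w)"
    by metis
  thus ?thesis by (simp add: has_field_derivative_iff)
qed

lemma F_deriv: assumes "0 < Re w" shows "(F has_field_derivative F1 w) (at w)"
proof -
  have "((\<lambda>w. of_real a + of_real b * w + I w) has_field_derivative (0 + of_real b * 1 + I1 w)) (at w)"
    by (rule DERIV_add[OF DERIV_add[OF DERIV_const DERIV_cmult[OF DERIV_ident]] I_deriv[OF assms]])
  thus ?thesis by (simp add: F_def[abs_def] F1_def)
qed

end

definition sect :: "real \<Rightarrow> complex \<Rightarrow> bool" where
  "sect \<phi> v \<longleftrightarrow> 0 \<le> Re v \<and> cos \<phi> * \<bar>Im v\<bar> \<le> sin \<phi> * Re v"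

lemma sect_aux:
  fixes x y c s :: real
  assumes "0 \<le> x" "0 \<le> c" "0 \<le> s" "c * \<bar>y\<bar> \<le> s * x"
  shows "c * (exp (- x) * \<bar>sin y\<bar>) \<le> s * (1 - exp (- x) * cos y)"
proof -
  have "c * \<bar>sin y\<bar> \<le> c * \<bar>y\<bar>" using assms(2) abs_sin_x_le_abs_x by (rule mult_left_mono[rotated])
  also have "\<dots> \<le> s * x" by fact
  also have "\<dots> \<le> s * (exp x - cos y)"
  proof (rule mult_left_mono)
    have "1 + x \<le> exp x" by (rule exp_ge_add_one_self)
    thus "x \<le> exp x - cos y" using cos_le_one[of y] by linarith
  qed fact
  finally have *: "c * \<bar>sin y\<bar> \<le> s * (exp x - cos y)" .
  have "c * (exp (- x) * \<bar>sin y\<bar>) = exp (- x) * (c * \<bar>sin y\<bar>)" by simp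
  also have "\<dots> \<le> exp (- x) * (s * (exp x - cos y))" using * by (rule mult_left_mono) simp
  also have "\<dots> = s * (1 - exp (- x) * cos y)"
    by (simp add: algebra_simps exp_minus)
  finally show ?thesis .
qed

lemma sect_one_minus_exp:
  assumes "sect \<phi> u" "0 \<le> cos \<phi>" "0 \<le> sin \<phi>"
  shows "sect \<phi> (1 - exp (- u))"
proof -
  have x: "0 \<le> Re u" and h: "cos \<phi> * \<bar>Im u\<bar> \<le> sin \<phi> * Re u" using assms by (auto simp: sect_def)
  have "exp (- Re u) * cos (Im u) \<le> 1"
  proof -
    have "exp (- Re u) * cos (Im u) \<le> exp (- Re u) * 1" by (rule mult_left_mono) auto
    also have "\<dots> \<le> 1" using x by simp
    finally show ?thesis .
  qed
  moreover have "cos \<phi> * (exp (- Re u) * \<bar>sin (Im u)\<bar>) \<le> sin \<phi> * (1 - exp (- Re u) * cos (Im u))"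
    by (rule sect_aux) (use x h assms in auto)
  ultimately show ?thesis
    by (simp add: sect_def Re_exp Im_exp abs_mult)
qed

lemma sect_0: "sect \<phi> 0" by (simp add: sect_def)

lemma sect_add: "0 \<le> cos \<phi> \<Longrightarrow> sect \<phi> u \<Longrightarrow> sect \<phi> v \<Longrightarrow> sect \<phi> (u + v)"
  unfolding sect_def
proof (elim conjE, intro conjI)
  assume c: "0 \<le> cos \<phi>" and h: "cos \<phi> * \<bar>Im u\<bar> \<le> sin \<phi> * Re u" "cos \<phi> * \<bar>Im v\<bar> \<le> sin \<phi> * Re v"
    and "0 \<le> Re u" "0 \<le> Re v"
  thus "0 \<le> Re (u + v)" by simp
  have "cos \<phi> * \<bar>Im (u + v)\<bar> \<le> cos \<phi> * (\<bar>Im u\<bar> + \<bar>Im v\<bar>)"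
    using c by (intro mult_left_mono) auto
  also have "\<dots> \<le> sin \<phi> * Re (u + v)" using h by (simp add: algebra_simps)
  finally show "cos \<phi> * \<bar>Im (u + v)\<bar> \<le> sin \<phi> * Re (u + v)" .
qed

lemma sect_scale: "0 \<le> c \<Longrightarrow> sect \<phi> v \<Longrightarrow> sect \<phi> (of_real c * v)"
  unfolding sect_def
proof (elim conjE, intro conjI)
  assume c: "0 \<le> c" and h: "0 \<le> Re v" "cos \<phi> * \<bar>Im v\<bar> \<le> sin \<phi> * Re v"
  thus "0 \<le> Re (of_real c * v)" by simp
  have "cos \<phi> * \<bar>Im (of_real c * v)\<bar> = c * (cos \<phi> * \<bar>Im v\<bar>)" using c by (simp add: abs_mult)
  also have "\<dots> \<le> c * (sin \<phi> * Re v)" using c h by (intro mult_left_mono) auto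
  finally show "cos \<phi> * \<bar>Im (of_real c * v)\<bar> \<le> sin \<phi> * Re (of_real c * v)" by (simp add: algebra_simps)
qed

lemma sect_real: "0 \<le> c \<Longrightarrow> 0 \<le> sin \<phi> \<Longrightarrow> sect \<phi> (of_real c)"
  by (simp add: sect_def)

lemma sect_integral:
  fixes g :: "'a \<Rightarrow> complex"
  assumes "integrable M g" "\<And>s. sect \<phi> (g s)" "0 \<le> cos \<phi>"
  shows "sect \<phi> (integral\<^sup>L M g)"
proof -
  have r: "Re (integral\<^sup>L M g) = (\<integral>s. Re (g s) \<partial>M)" using assms(1) by simp
  have i: "Im (integral\<^sup>L M g) = (\<integral>s. Im (g s) \<partial>M)" using assms(1) by simp
  have "0 \<le> (\<integral>s. Re (g s) \<partial>M)" using assms(2) by (intro integral_nonneg_AE) (auto simp: sect_def)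
  moreover have "cos \<phi> * \<bar>\<integral>s. Im (g s) \<partial>M\<bar> \<le> sin \<phi> * (\<integral>s. Re (g s) \<partial>M)"
  proof -
    have "cos \<phi> * \<bar>\<integral>s. Im (g s) \<partial>M\<bar> \<le> cos \<phi> * (\<integral>s. \<bar>Im (g s)\<bar> \<partial>M)"
      using assms(3) integral_abs_bound by (rule mult_left_mono[rotated])
    also have "\<dots> = (\<integral>s. cos \<phi> * \<bar>Im (g s)\<bar> \<partial>M)" by simp
    also have "\<dots> \<le> (\<integral>s. sin \<phi> * Re (g s) \<partial>M)"
      using assms(1,2) by (intro integral_mono) (auto simp: sect_def)
    also have "\<dots> = sin \<phi> * (\<integral>s. Re (g s) \<partial>M)" by simp
    finally show ?thesis .
  qed
  ultimately show ?thesis by (simp add: sect_def r i)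
qed

lemma Re_Im_Arg: "Re v = norm v * cos (Arg v)" "Im v = norm v * sin (Arg v)"
  by (metis Re_rcis rcis_cmod_Arg) (metis Im_rcis rcis_cmod_Arg)

lemma sect_Arg:
  assumes "0 \<le> \<phi>" "\<phi> \<le> pi / 2" "v \<noteq> 0"
  shows "sect \<phi> v \<longleftrightarrow> \<bar>Arg v\<bar> \<le> \<phi>"
proof -
  define A where "A = Arg v"
  define t where "t = \<bar>A\<bar>"
  have r: "0 < norm v" using assms by simp
  have t: "0 \<le> t" "t \<le> pi" using mpi_less_Arg[of v] Arg_le_pi[of v] by (auto simp: t_def A_def)
  have cA: "cos A = cos t" by (simp add: t_def)
  have sA: "\<bar>sin A\<bar> = sin t"
    using t sin_ge_zero[of t] by (cases "A \<ge> 0") (auto simp: t_def)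
  have "sect \<phi> v \<longleftrightarrow> 0 \<le> cos t \<and> cos \<phi> * sin t \<le> sin \<phi> * cos t"
  proof -
    have "sect \<phi> v \<longleftrightarrow> 0 \<le> norm v * cos A \<and> cos \<phi> * (norm v * \<bar>sin A\<bar>) \<le> sin \<phi> * (norm v * cos A)"
      by (simp add: sect_def Re_Im_Arg[of v, folded A_def] abs_mult)
    also have "\<dots> \<longleftrightarrow> 0 \<le> cos A \<and> cos \<phi> * \<bar>sin A\<bar> \<le> sin \<phi> * cos A"
      using r by (simp add: zero_le_mult_iff mult.left_commute[of _ "norm v"])
    finally show ?thesis using cA sA by simp
  qed
  also have "\<dots> \<longleftrightarrow> t \<le> \<phi>"
  proof
    assume h: "0 \<le> cos t \<and> cos \<phi> * sin t \<le> sin \<phi> * cos t"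
    show "t \<le> \<phi>"
    proof (rule ccontr)
      assume "\<not> t \<le> \<phi>"
      hence lt: "\<phi> < t" by simp
      have "t \<le> pi / 2"
      proof (rule ccontr)
        assume "\<not> t \<le> pi / 2"
        hence "cos t < 0" using t by (intro cos_lt_zero_pi) auto
        with h show False by simp
      qed
      hence "0 < sin (t - \<phi>)" using lt assms by (intro sin_gt_zero) auto
      moreover have "sin (t - \<phi>) = sin t * cos \<phi> - cos t * sin \<phi>" by (simp add: sin_diff)
      ultimately show False using h by (simp add: algebra_simps)
    qed
  next
    assume h: "t \<le> \<phi>"
    have "0 \<le> cos t" using h t assms by (intro cos_ge_zero) auto
    moreover have "0 \<le> sin (\<phi> - t)" using h t assms by (intro sin_ge_zero) auto
    moreover have "sin (\<phi> - t) = sin \<phi> * cos t - cos \<phi> * sin t" by (simp add: sin_diff)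
    ultimately show "0 \<le> cos t \<and> cos \<phi> * sin t \<le> sin \<phi> * cos t" by (simp add: algebra_simps)
  qed
  finally show ?thesis by (simp add: t_def A_def)
qed

lemma Arg_powr:
  fixes z :: complex and c :: real
  assumes "z \<noteq> 0" "- pi < c * Arg z" "c * Arg z \<le> pi"
  shows "Arg (z powr of_real c) = c * Arg z" "norm (z powr of_real c) = norm z powr c"
proof -
  have e: "z powr of_real c = exp (of_real c * Ln z)" using assms by (simp add: powr_def)
  have i: "Im (of_real c * Ln z) = c * Arg z" by (simp add: Arg_eq_Im_Ln[OF assms(1)])
  show "Arg (z powr of_real c) = c * Arg z" unfolding e using assms i by (subst Arg_exp) auto
  show "norm (z powr of_real c) = norm z powr c" by (simp add: norm_powr_real_powr')
qed

lemma sum_lower: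
  fixes l g :: complex and \<theta> \<gamma> :: real
  assumes l: "\<bar>Arg l\<bar> \<le> \<theta>" and g: "\<bar>Arg g\<bar> \<le> \<gamma>" and tg: "0 \<le> \<theta> + \<gamma>" "\<theta> + \<gamma> \<le> pi"
  shows "cos ((\<theta> + \<gamma>) / 2) * (norm l + norm g) \<le> norm (l + g)"
proof -
  define c where "c = cos ((\<theta> + \<gamma>) / 2)"
  define p q A B where "p = norm l" "q = norm g" "A = Arg l" "B = Arg g"
  have c0: "0 \<le> c" unfolding c_def using tg by (intro cos_ge_zero) auto
  have c1: "c \<le> 1" by (simp add: c_def)
  have pq: "0 \<le> p" "0 \<le> q" by (auto simp: p_q_A_B_def)
  have dAB: "\<bar>A - B\<bar> \<le> \<theta> + \<gamma>" using l g by (auto simp: p_q_A_B_def)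
  have "cos (\<theta> + \<gamma>) \<le> cos \<bar>A - B\<bar>"
    using dAB tg by (subst cos_mono_le_eq) auto
  moreover have "cos (\<theta> + \<gamma>) = 2 * c^2 - 1" unfolding c_def
    by (metis cos_double_cos mult_2 field_sum_of_halves)
  ultimately have cAB: "2 * c^2 - 1 \<le> cos (A - B)" by simp
  have "(norm (l + g))^2 = (p * cos A + q * cos B)^2 + (p * sin A + q * sin B)^2"
    by (simp add: cmod_power2 Re_Im_Arg[of l] Re_Im_Arg[of g] p_q_A_B_def)
  also have "\<dots> = p^2 + q^2 + 2 * p * q * cos (A - B)"
  proof -
    have s1: "sin A ^ 2 + cos A ^ 2 = 1" and s2: "sin B ^ 2 + cos B ^ 2 = 1" by simp_all
    show ?thesis unfolding cos_diff using s1 s2 by algebra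
  qed
  finally have eq: "(norm (l + g))^2 = p^2 + q^2 + 2 * p * q * cos (A - B)" .
  have "(c * (p + q))^2 \<le> (norm (l + g))^2"
  proof -
    have "(c * (p + q))^2 = p^2 + q^2 + 2 * p * q * (2 * c^2 - 1) - (1 - c^2) * (p - q)^2"
      by (simp add: power2_eq_square algebra_simps)
    also have "\<dots> \<le> p^2 + q^2 + 2 * p * q * (2 * c^2 - 1)"
    proof -
      have "0 \<le> 1 - c^2" using c0 c1 by (simp add: power_le_one)
      thus ?thesis by simp
    qed
    also have "\<dots> \<le> p^2 + q^2 + 2 * p * q * cos (A - B)"
      using cAB pq by (intro add_left_mono mult_left_mono) auto
    finally show ?thesis using eq by simp
  qed
  hence "c * (p + q) \<le> norm (l + g)" by (rule power2_le_imp_le) simp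
  thus ?thesis by (simp add: c_def p_q_A_B_def)
qed

context bern begin

definition "fr t = Re (F (of_real t))"
definition "fr1 t = Re (F1 (of_real t))"

lemma Re_kern: "Re (kern w s) = indicator {0<..} s * (1 - exp (- (Re w * s)) * cos (Im w * s))"
  by (simp add: kern_def Re_exp)

lemma ReF: "0 \<le> Re w \<Longrightarrow> Re (F w) = a + b * Re w + (\<integral>s. Re (kern w s) \<partial>\<mu>)"
  by (simp add: F_def I_def kern_int)

lemma fr_eq: "0 \<le> t \<Longrightarrow> fr t = a + b * t + (\<integral>s. indicator {0<..} s * (1 - exp (- (t * s))) \<partial>\<mu>)"
  by (simp add: fr_def ReF Re_kern)

lemma Re_kern_int: "0 \<le> Re w \<Longrightarrow> integrable \<mu> (\<lambda>s. Re (kern w s))"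
  using kern_int by auto

lemma fr_le_ReF: assumes "0 < Re w" shows "fr (Re w) \<le> Re (F w)"
proof -
  have "(\<integral>s. Re (kern (of_real (Re w)) s) \<partial>\<mu>) \<le> (\<integral>s. Re (kern w s) \<partial>\<mu>)"
  proof (rule integral_mono)
    show "integrable \<mu> (\<lambda>s. Re (kern (of_real (Re w)) s))" using assms by (intro Re_kern_int) simp
    show "integrable \<mu> (\<lambda>s. Re (kern w s))" using assms by (intro Re_kern_int) simp
    fix s
    have "exp (- (Re w * s)) * cos (Im w * s) \<le> exp (- (Re w * s)) * 1"
      by (rule mult_left_mono) auto
    thus "Re (kern (of_real (Re w)) s) \<le> Re (kern w s)"
      by (auto simp: Re_kern indicator_def)
  qed
  thus ?thesis using assms by (simp add: fr_def ReF)
qed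

lemma fr_mono: assumes "0 < t" "t \<le> t'" shows "fr t \<le> fr t'"
proof -
  have "(\<integral>s. Re (kern (of_real t) s) \<partial>\<mu>) \<le> (\<integral>s. Re (kern (of_real t') s) \<partial>\<mu>)"
  proof (rule integral_mono)
    show "integrable \<mu> (\<lambda>s. Re (kern (of_real t) s))" using assms by (intro Re_kern_int) simp
    show "integrable \<mu> (\<lambda>s. Re (kern (of_real t') s))" using assms by (intro Re_kern_int) simp
    fix s
    show "Re (kern (of_real t) s) \<le> Re (kern (of_real t') s)"
      using assms by (auto simp: Re_kern indicator_def intro!: mult_right_mono)
  qed
  moreover have "b * t \<le> b * t'" using assms b_nn by (intro mult_left_mono) auto
  ultimately show ?thesis using assms by (simp add: fr_def ReF)
qed

lemma fr_nonneg: assumes "0 \<le> t" shows "0 \<le> fr t"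
proof -
  have "0 \<le> (\<integral>s. indicator {0<..} s * (1 - exp (- (t * s))) \<partial>\<mu>)"
    using assms by (intro integral_nonneg_AE AE_I2) (auto simp: indicator_def)
  thus ?thesis using assms a_nn b_nn by (simp add: fr_eq)
qed

lemma norm_kern1: "norm (kern1 w s) = Re (kern1 (of_real (Re w)) s)"
  by (simp add: kern1_def norm_mult norm_exp_eq_Re indicator_def Re_exp)

lemma F1_bound: assumes "0 < Re w" shows "norm (F1 w) \<le> fr1 (Re w)"
proof -
  have "norm (I1 w) \<le> (\<integral>s. norm (kern1 w s) \<partial>\<mu>)" unfolding I1_def by (rule integral_norm_bound)
  also have "\<dots> = (\<integral>s. Re (kern1 (of_real (Re w)) s) \<partial>\<mu>)" by (simp add: norm_kern1)
  also have "\<dots> = Re (I1 (of_real (Re w)))" unfolding I1_def using assms by (simp add: kern1_int)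
  finally have "norm (I1 w) \<le> Re (I1 (of_real (Re w)))" .
  moreover have "norm (F1 w) \<le> b + norm (I1 w)" unfolding F1_def using b_nn
    by (metis abs_of_nonneg norm_of_real norm_triangle_ineq)
  ultimately show ?thesis by (simp add: fr1_def F1_def)
qed

lemma fr1_anti: assumes "0 < t" "t \<le> t'" shows "fr1 t' \<le> fr1 t"
proof -
  have "(\<integral>s. Re (kern1 (of_real t') s) \<partial>\<mu>) \<le> (\<integral>s. Re (kern1 (of_real t) s) \<partial>\<mu>)"
  proof (rule integral_mono)
    show "integrable \<mu> (\<lambda>s. Re (kern1 (of_real t) s))" using assms kern1_int by auto
    show "integrable \<mu> (\<lambda>s. Re (kern1 (of_real t') s))" using assms kern1_int by auto
    fix s
    show "Re (kern1 (of_real t') s) \<le> Re (kern1 (of_real t) s)"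
    proof (cases "0 < s")
      case True
      have "t * s \<le> t' * s" using assms True by (intro mult_right_mono) auto
      hence e: "exp (- (t' * s)) \<le> exp (- (t * s))" by simp
      show ?thesis using mult_left_mono[OF e, of s] True by (simp add: kern1_def Re_exp)
    qed (simp add: kern1_def)
  qed
  thus ?thesis using assms kern1_int by (simp add: fr1_def F1_def I1_def)
qed

lemma fr1_nonneg: assumes "0 < t" shows "0 \<le> fr1 t"
proof -
  have "norm (F1 (of_real t)) \<le> fr1 t" using F1_bound[of "of_real t"] assms by simp
  thus ?thesis using norm_ge_zero order_trans by blast
qed

lemma fr_deriv: assumes "0 < t" shows "(fr has_real_derivative fr1 t) (at t)"
proof -
  have "((\<lambda>x. F (of_real x)) has_vector_derivative F1 (of_real t)) (at t)"
    by (rule has_vector_derivative_real_field) (use F_deriv assms in simp)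
  hence "((\<lambda>x. Re (F (of_real x))) has_field_derivative Re (F1 (of_real t))) (at t)"
    by (rule has_field_derivative_Re)
  thus ?thesis by (simp add: fr_def[abs_def] fr1_def)
qed

lemma F_holo: "F holomorphic_on {z. 0 < Re z}"
  using F_deriv by (auto simp: holomorphic_on_def field_differentiable_def
      intro: has_field_derivative_at_within)

lemma F1_cont: "continuous_on {z. 0 < Re z} F1"
proof -
  have "deriv F holomorphic_on {z. 0 < Re z}"
    by (rule holomorphic_deriv[OF F_holo]) (simp add: open_halfspace_Re_gt)
  hence "continuous_on {z. 0 < Re z} (deriv F)" by (rule holomorphic_on_imp_continuous_on)
  moreover have "deriv F z = F1 z" if "z \<in> {z. 0 < Re z}" for z
    using F_deriv that by (auto intro: DERIV_imp_deriv)
  ultimately show ?thesis using continuous_on_cong by blast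
qed

lemma fr1_cont: "continuous_on {0<..} fr1"
proof -
  have "continuous_on {0<..} (\<lambda>t. Re (F1 (of_real t)))"
    by (intro continuous_intros continuous_on_compose2[OF F1_cont]) auto
  thus ?thesis by (simp add: fr1_def[abs_def])
qed

lemma F_sect:
  assumes "sect \<phi> w" "0 < Re w" "0 \<le> cos \<phi>" "0 \<le> sin \<phi>"
  shows "sect \<phi> (F w)"
proof -
  have "sect \<phi> (I w)" unfolding I_def
  proof (rule sect_integral)
    show "integrable \<mu> (kern w)" using assms by (intro kern_int) simp
    fix s
    show "sect \<phi> (kern w s)"
    proof (cases "0 < s")
      case True
      have "sect \<phi> (w * of_real s)" using sect_scale[OF _ assms(1), of s] True by (simp add: mult.commute)
      hence "sect \<phi> (1 - exp (- (w * of_real s)))" using assms by (intro sect_one_minus_exp)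
      thus ?thesis using True by (simp add: kern_def)
    qed (simp add: kern_def sect_0)
  qed fact
  moreover have "sect \<phi> (of_real a)" using a_nn assms by (intro sect_real)
  moreover have "sect \<phi> (of_real b * w)" using b_nn assms by (intro sect_scale)
  ultimately show ?thesis unfolding F_def using assms by (intro sect_add)
qed

lemma dichotomy: "(\<forall>t>0. 0 < fr t) \<or> (\<forall>w. 0 < Re w \<longrightarrow> F w = 0)"
proof (cases "\<forall>t>0. 0 < fr t")
  case False
  then obtain t where t: "0 < t" "fr t \<le> 0" by (auto simp: not_less)
  define k where "k s = indicator {0<..} s * (1 - exp (- (t * s)))" for s
  have knn: "0 \<le> k s" for s using t by (auto simp: k_def indicator_def)
  have kint: "integrable \<mu> k"
    using Re_kern_int[of "of_real t"] t by (simp add: k_def[abs_def] Re_kern)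
  have ik: "0 \<le> integral\<^sup>L \<mu> k" by (intro integral_nonneg_AE AE_I2 knn)
  have bt: "0 \<le> b * t" using b_nn t by simp
  have fr: "fr t = a + b * t + integral\<^sup>L \<mu> k" using t by (simp add: fr_eq k_def[abs_def])
  hence a0: "a = 0" and "b * t = 0" and i0: "integral\<^sup>L \<mu> k = 0" using t a_nn ik bt by linarith+
  hence b0: "b = 0" using t by simp
  have "AE s in \<mu>. k s = 0" using i0 integral_nonneg_eq_0_iff_AE[OF kint] knn by simp
  hence AEs: "AE s in \<mu>. s \<le> 0"
  proof (rule AE_mp, intro AE_I2 impI)
    fix s assume "k s = 0"
    thus "s \<le> 0" using t by (auto simp: k_def indicator_def split: if_splits)
  qed
  have "\<forall>w. 0 < Re w \<longrightarrow> F w = 0"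
  proof (intro allI impI)
    fix w :: complex
    assume "0 < Re w"
    have Iw: "I w = 0" unfolding I_def
      by (rule integral_eq_zero_AE) (use AEs in \<open>auto simp: kern_def elim!: AE_mp\<close>)
    show "F w = 0" unfolding F_def using Iw a0 b0 by simp
  qed
  thus ?thesis by blast
qed simp

end

lemma FTC_bound:
  fixes Q u :: "real \<Rightarrow> real" and M :: real
  assumes deriv: "\<And>x. 0 < x \<Longrightarrow> (Q has_real_derivative u x) (at x)"
    and unn: "\<And>x. 0 < x \<Longrightarrow> 0 \<le> u x"
    and ucont: "continuous_on {0<..} u"
    and Qb: "\<And>x. 0 < x \<Longrightarrow> 0 \<le> Q x \<and> Q x \<le> M"
  shows "(\<integral>\<^sup>+x. ennreal (indicator {0<..} x * u x) \<partial>lborel) \<le> ennreal M"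
proof -
  define S where "S n = {1 / real (Suc n) .. real (Suc n)}" for n
  have S0: "S n \<subseteq> {0<..}" for n by (auto simp: S_def intro: less_le_trans[of 0 "1 / real (Suc n)"])
  have ab: "1 / real (Suc n) \<le> real (Suc n)" for n
  proof -
    have "1 / real (Suc n) \<le> 1" by simp
    also have "1 \<le> real (Suc n)" by simp
    finally show ?thesis .
  qed
  have int_n: "(\<integral>\<^sup>+x. ennreal (indicator (S n) x * u x) \<partial>lborel)
      = ennreal (Q (real (Suc n)) - Q (1 / real (Suc n)))" for n
  proof (rule nn_integral_has_integral_lebesgue)
    show "0 \<le> u x" if "x \<in> S n" for x using that S0 unn by auto
    show "(u has_integral Q (real (Suc n)) - Q (1 / real (Suc n))) (S n)"
      unfolding S_def
    proof (rule fundamental_theorem_of_calculus[OF ab])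
      fix x assume "x \<in> {1 / real (Suc n)..real (Suc n)}"
      hence "0 < x" using S0[of n] by (auto simp: S_def)
      hence "(Q has_real_derivative u x) (at x within {1 / real (Suc n)..real (Suc n)})"
        using deriv has_field_derivative_at_within by blast
      thus "(Q has_vector_derivative u x) (at x within {1 / real (Suc n)..real (Suc n)})"
        by (simp add: has_real_derivative_iff_has_vector_derivative)
    qed
  qed
  have le_n: "(\<integral>\<^sup>+x. ennreal (indicator (S n) x * u x) \<partial>lborel) \<le> ennreal M" for n
  proof -
    have "0 < 1 / real (Suc n)" by simp
    hence "Q (real (Suc n)) - Q (1 / real (Suc n)) \<le> M"
      using Qb[of "real (Suc n)"] Qb[of "1 / real (Suc n)"] by simp
    thus ?thesis unfolding int_n by (rule ennreal_leI)
  qed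
  have meas: "(\<lambda>x. ennreal (indicator (S n) x * u x)) \<in> borel_measurable borel" for n
  proof -
    have "continuous_on (S n) u" by (rule continuous_on_subset[OF ucont S0])
    hence m: "(\<lambda>x. indicator (S n) x *\<^sub>R u x) \<in> borel_measurable borel"
      by (intro borel_measurable_continuous_on_indicator) (auto simp: S_def)
    have "(\<lambda>x. ennreal (indicator (S n) x *\<^sub>R u x)) \<in> borel_measurable borel"
      by (rule measurable_compose[OF m measurable_ennreal])
    thus ?thesis by simp
  qed
  have inc: "incseq (\<lambda>n x. ennreal (indicator (S n) x * u x))"
  proof (rule incseq_SucI, rule le_funI)
    fix n x
    have sub: "S n \<subseteq> S (Suc n)"
    proof -
      have "1 / real (Suc (Suc n)) \<le> 1 / real (Suc n)" by (intro divide_left_mono) auto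
      thus ?thesis by (auto simp: S_def)
    qed
    show "ennreal (indicator (S n) x * u x) \<le> ennreal (indicator (S (Suc n)) x * u x)"
    proof (cases "x \<in> S n")
      case True
      thus ?thesis using sub by auto
    next
      case False
      thus ?thesis by simp
    qed
  qed
  have sup: "(SUP n. ennreal (indicator (S n) x * u x)) = ennreal (indicator {0<..} x * u x)" for x
  proof (cases "0 < x")
    case False
    hence "x \<notin> S n" for n using S0 by auto
    thus ?thesis using False by simp
  next
    case True
    obtain N :: nat where N: "max x (1 / x) \<le> real N" using real_arch_simple by blast
    have xN: "x \<in> S N"
    proof -
      have "x \<le> real (Suc N)" using N by simp
      moreover have "1 / real (Suc N) \<le> x"
      proof -
        have "1 / x \<le> real (Suc N)" using N by simp
        thus ?thesis using True by (simp add: field_simps)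
      qed
      ultimately show ?thesis by (simp add: S_def)
    qed
    show ?thesis
    proof (rule antisym)
      show "(SUP n. ennreal (indicator (S n) x * u x)) \<le> ennreal (indicator {0<..} x * u x)"
      proof (rule SUP_least)
        fix n
        show "ennreal (indicator (S n) x * u x) \<le> ennreal (indicator {0<..} x * u x)"
          using True unn[OF True] by (auto simp: indicator_def intro!: ennreal_leI)
      qed
      have "ennreal (indicator {0<..} x * u x) = ennreal (indicator (S N) x * u x)"
        using True xN by simp
      also have "\<dots> \<le> (SUP n. ennreal (indicator (S n) x * u x))" by (rule SUP_upper) simp
      finally show "ennreal (indicator {0<..} x * u x) \<le> (SUP n. ennreal (indicator (S n) x * u x))" .
    qed
  qed
  have "(\<integral>\<^sup>+x. ennreal (indicator {0<..} x * u x) \<partial>lborel)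
      = (\<integral>\<^sup>+x. (SUP n. ennreal (indicator (S n) x * u x)) \<partial>lborel)"
    by (simp add: sup)
  also have "\<dots> = (SUP n. \<integral>\<^sup>+x. ennreal (indicator (S n) x * u x) \<partial>lborel)"
    by (rule nn_integral_monotone_convergence_SUP[OF inc]) (use meas in \<open>simp add: measurable_lborel2\<close>)
  also have "\<dots> \<le> ennreal M" by (rule SUP_least) (rule le_n)
  finally show ?thesis .
qed

lemma Phi_deriv:
  fixes Fr :: "real \<Rightarrow> real"
  assumes L: "0 < L" and \<beta>: "0 < \<beta>" and pos: "0 < Fr x" and d: "(Fr has_real_derivative D) (at x)"
  shows "((\<lambda>x. Fr x * (L + Fr x powr \<beta>) powr (-1/\<beta>)) has_real_derivative
           L * (D * (L + Fr x powr \<beta>) powr (-1 - 1/\<beta>))) (at x)"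
proof -
  define P where "P = L + Fr x powr \<beta>"
  have P: "0 < P" unfolding P_def using L by (intro add_pos_nonneg) auto
  have P0: "0 < L + Fr x powr \<beta>" using P by (simp add: P_def)
  have d1: "((\<lambda>x. Fr x powr \<beta>) has_real_derivative \<beta> * Fr x powr (\<beta> - 1) * D) (at x)"
    using DERIV_fun_powr[OF d pos, of \<beta>] by simp
  have d2: "((\<lambda>x. L + Fr x powr \<beta>) has_real_derivative 0 + \<beta> * Fr x powr (\<beta> - 1) * D) (at x)"
    by (rule DERIV_add[OF DERIV_const d1])
  have d3: "((\<lambda>x. (L + Fr x powr \<beta>) powr (-1/\<beta>)) has_real_derivative
      (-1/\<beta>) * P powr (-1/\<beta> - 1) * (0 + \<beta> * Fr x powr (\<beta> - 1) * D)) (at x)"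
    using DERIV_fun_powr[OF d2 P0, of "-1/\<beta>"] by (simp add: P_def)
  have d4: "((\<lambda>x. Fr x * (L + Fr x powr \<beta>) powr (-1/\<beta>)) has_real_derivative
     D * P powr (-1/\<beta>) + (-1/\<beta>) * P powr (-1/\<beta> - 1) * (0 + \<beta> * Fr x powr (\<beta> - 1) * D) * Fr x) (at x)"
    using DERIV_mult[OF d d3] by (simp add: P_def)
  moreover have "D * P powr (-1/\<beta>) + (-1/\<beta>) * P powr (-1/\<beta> - 1) * (0 + \<beta> * Fr x powr (\<beta> - 1) * D) * Fr x
     = L * (D * P powr (-1 - 1/\<beta>))"
  proof -
    have e1: "P powr (-1/\<beta>) = P * P powr (-1/\<beta> - 1)"
      using P powr_add[of P 1 "-1/\<beta> - 1"] by simp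
    have e2: "Fr x * Fr x powr (\<beta> - 1) = Fr x powr \<beta>"
      using pos powr_add[of "Fr x" 1 "\<beta> - 1"] by simp
    have e3: "-1/\<beta> - 1 = -1 - 1/\<beta>" by simp
    have "D * P powr (-1/\<beta>) + (-1/\<beta>) * P powr (-1/\<beta> - 1) * (0 + \<beta> * Fr x powr (\<beta> - 1) * D) * Fr x
        = D * P powr (-1/\<beta> - 1) * (P - Fr x * Fr x powr (\<beta> - 1))"
      using \<beta> unfolding e1 by (simp add: field_simps)
    also have "\<dots> = L * (D * P powr (-1 - 1/\<beta>))"
      unfolding e2 e3 by (simp add: P_def)
    finally show ?thesis .
  qed
  ultimately show ?thesis by (simp add: P_def)
qed

lemma Phi_bounds:
  fixes t L \<beta> :: real
  assumes "0 \<le> t" "0 < L" "0 < \<beta>"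
  shows "0 \<le> t * (L + t powr \<beta>) powr (-1/\<beta>)" "t * (L + t powr \<beta>) powr (-1/\<beta>) \<le> 1"
proof -
  show "0 \<le> t * (L + t powr \<beta>) powr (-1/\<beta>)" using assms by simp
  have P: "0 < L + t powr \<beta>" using assms by (simp add: add_pos_nonneg)
  have "(t powr \<beta>) powr (1/\<beta>) = t powr (\<beta> * (1/\<beta>))" by (rule powr_powr)
  also have "\<dots> = t" using assms by simp
  finally have "t = (t powr \<beta>) powr (1/\<beta>)" by simp
  also have "\<dots> \<le> (L + t powr \<beta>) powr (1/\<beta>)" using assms by (intro powr_mono2) auto
  finally have "t \<le> (L + t powr \<beta>) powr (1/\<beta>)" .
  moreover have "(L + t powr \<beta>) powr (-1/\<beta>) = 1 / (L + t powr \<beta>) powr (1/\<beta>)"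
    by (metis minus_divide_left powr_minus_divide)
  ultimately show "t * (L + t powr \<beta>) powr (-1/\<beta>) \<le> 1" using P by (simp add: divide_le_eq)
qed

lemma key_ineq:
  fixes s T L \<beta> :: real
  assumes "0 < T" "T \<le> s" "0 < L" "1 < \<beta>"
  shows "s powr (\<beta> - 1) / (L + s powr \<beta>)^2 \<le> (L + T powr \<beta>) powr (-1 - 1/\<beta>)"
proof -
  define P where "P = L + s powr \<beta>"
  have s: "0 < s" using assms by simp
  have P: "0 < P" using assms by (simp add: P_def add_pos_nonneg)
  have "(s powr \<beta>) powr ((\<beta> - 1) / \<beta>) = s powr (\<beta> * ((\<beta> - 1) / \<beta>))" by (rule powr_powr)
  also have "\<beta> * ((\<beta> - 1) / \<beta>) = \<beta> - 1" using assms by simp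
  finally have e0: "s powr (\<beta> - 1) = (s powr \<beta>) powr ((\<beta> - 1) / \<beta>)" by simp
  have "(s powr \<beta>) powr ((\<beta> - 1) / \<beta>) \<le> P powr ((\<beta> - 1) / \<beta>)"
    using assms by (intro powr_mono2) (auto simp: P_def)
  hence "s powr (\<beta> - 1) / P^2 \<le> P powr ((\<beta> - 1) / \<beta>) / P^2"
    unfolding e0 using P by (intro divide_right_mono) auto
  also have "\<dots> = P powr (-1 - 1/\<beta>)"
  proof -
    have "P^2 = P powr 2" using P by simp
    hence "P powr ((\<beta> - 1) / \<beta>) / P^2 = P powr ((\<beta> - 1) / \<beta> - 2)" by (simp only: powr_diff)
    also have "(\<beta> - 1) / \<beta> - 2 = -1 - 1/\<beta>" using assms by (simp add: field_simps)
    finally show ?thesis .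
  qed
  also have "\<dots> \<le> (L + T powr \<beta>) powr (-1 - 1/\<beta>)"
  proof (rule powr_mono2')
    show "-1 - 1/\<beta> \<le> 0" using assms by (simp add: field_simps)
    show "0 < L + T powr \<beta>" using assms by (simp add: add_pos_nonneg)
    have "T powr \<beta> \<le> s powr \<beta>" using assms by (intro powr_mono2) auto
    thus "L + T powr \<beta> \<le> P" by (simp add: P_def)
  qed
  finally show ?thesis by (simp add: P_def)
qed

lemma finish_lemma:
  fixes h hd :: "complex \<Rightarrow> complex"
  assumes d: "\<And>z. 0 < Re z \<Longrightarrow> (h has_field_derivative hd z) (at z)"
    and n: "\<And>z. 0 < Re z \<Longrightarrow> norm (h z) \<le> M1"
    and bi: "B_int h \<le> ennreal M2" and "0 \<le> M1" "0 \<le> M2" "M1 + M2 \<le> C"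
  shows "in_B h \<and> B_norm h \<le> ennreal C"
proof
  have "h holomorphic_on {z. 0 < Re z}"
    using d by (auto simp: holomorphic_on_def field_differentiable_def intro: has_field_derivative_at_within)
  moreover have "B_int h < \<infinity>" using bi by (simp add: le_less_trans)
  ultimately show "in_B h" by (simp add: in_B_def)
  have "(SUP z\<in>{z. 0 < Re z}. ennreal (norm (h z))) \<le> ennreal M1"
    by (rule SUP_least) (auto intro!: ennreal_leI n)
  hence "B_norm h \<le> ennreal M1 + ennreal M2" unfolding B_norm_def using bi by (rule add_mono)
  also have "\<dots> = ennreal (M1 + M2)" using assms by (simp add: ennreal_plus)
  also have "\<dots> \<le> ennreal C" using assms by (intro ennreal_leI) auto
  finally show "B_norm h \<le> ennreal C" .
qed

lemma B_int_bound:
  fixes h :: "complex \<Rightarrow> complex" and v :: "real \<Rightarrow> real"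
  assumes "\<And>x y. 0 < x \<Longrightarrow> norm (deriv h (Complex x y)) \<le> v x"
    and "(\<integral>\<^sup>+x. ennreal (indicator {0<..} x * v x) \<partial>lborel) \<le> ennreal M"
  shows "B_int h \<le> ennreal M"
proof -
  have "B_int h \<le> (\<integral>\<^sup>+x. ennreal (indicator {0<..} x * v x) \<partial>lborel)"
    unfolding B_int_def
  proof (rule nn_integral_mono)
    fix x :: real
    show "(SUP y. ennreal (norm (deriv h (Complex x y)))) * indicator {0<..} x
          \<le> ennreal (indicator {0<..} x * v x)"
    proof (cases "0 < x")
      case True
      have "(SUP y. ennreal (norm (deriv h (Complex x y)))) \<le> ennreal (v x)"
        by (rule SUP_least) (auto intro!: ennreal_leI assms(1) True)
      thus ?thesis using True by simp
    qed simp
  qed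
  also have "\<dots> \<le> ennreal M" by fact
  finally show ?thesis .
qed

lemma powr_facts:
  fixes z :: complex and \<alpha> :: real
  assumes z: "0 < Re z" and \<alpha>: "0 < \<alpha>" "\<alpha> < 1"
  shows "z powr of_real \<alpha> \<noteq> 0"
    and "\<bar>Arg (z powr of_real \<alpha>)\<bar> \<le> \<alpha> * pi / 2"
    and "cos (\<alpha> * pi / 2) * Re z powr \<alpha> \<le> Re (z powr of_real \<alpha>)"
    and "((\<lambda>z. z powr of_real \<alpha>) has_field_derivative of_real \<alpha> * z powr (of_real \<alpha> - 1)) (at z)"
    and "norm (z powr (of_real \<alpha> - 1)) \<le> Re z powr (\<alpha> - 1)"
proof -
  have z0: "z \<noteq> 0" using z by auto
  show "z powr of_real \<alpha> \<noteq> 0" using z0 by (simp add: powr_def)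
  have A: "\<bar>Arg z\<bar> < pi / 2" using z Arg_Re_pos[of z] by blast
  have aA: "\<bar>\<alpha> * Arg z\<bar> \<le> \<alpha> * pi / 2" using A \<alpha> by (simp add: abs_mult)
  have apl: "\<alpha> * pi < 1 * pi" using \<alpha> by (intro mult_strict_right_mono) auto
  have ap0: "0 \<le> \<alpha> * pi" using \<alpha> by simp
  have api: "\<alpha> * pi / 2 < pi" using apl pi_gt_zero by linarith
  have "-pi < \<alpha> * Arg z" "\<alpha> * Arg z \<le> pi" using aA api unfolding abs_le_iff by linarith+
  note ap = Arg_powr[OF z0 this]
  show "\<bar>Arg (z powr of_real \<alpha>)\<bar> \<le> \<alpha> * pi / 2" using ap(1) aA by simp
  have "cos (\<alpha> * pi / 2) \<le> cos \<bar>\<alpha> * Arg z\<bar>"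
  proof (rule cos_monotone_0_pi_le)
    show "\<alpha> * pi / 2 \<le> pi" using api by linarith
  qed (use aA in auto)
  hence cc: "cos (\<alpha> * pi / 2) \<le> cos (Arg (z powr of_real \<alpha>))" using ap(1) by simp
  have "Re z \<le> norm z" by (rule complex_Re_le_cmod)
  hence rz: "Re z powr \<alpha> \<le> norm z powr \<alpha>" using z \<alpha> by (intro powr_mono2) auto
  have c0: "0 \<le> cos (\<alpha> * pi / 2)" by (intro cos_ge_zero) (use apl ap0 in linarith)+
  have "cos (\<alpha> * pi / 2) * Re z powr \<alpha> \<le> cos (\<alpha> * pi / 2) * norm z powr \<alpha>"
    using rz c0 by (rule mult_left_mono)
  also have "\<dots> \<le> cos (Arg (z powr of_real \<alpha>)) * norm z powr \<alpha>"
    using cc by (rule mult_right_mono) simp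
  also have "\<dots> = Re (z powr of_real \<alpha>)"
    using Re_Im_Arg(1)[of "z powr of_real \<alpha>"] ap(2) by simp
  finally show "cos (\<alpha> * pi / 2) * Re z powr \<alpha> \<le> Re (z powr of_real \<alpha>)" .
  have "z \<notin> \<real>\<^sub>\<le>\<^sub>0" using z by (auto simp: complex_nonpos_Reals_iff)
  thus "((\<lambda>z. z powr of_real \<alpha>) has_field_derivative of_real \<alpha> * z powr (of_real \<alpha> - 1)) (at z)"
    by (rule has_field_derivative_powr)
  have "norm (z powr (of_real \<alpha> - 1)) = norm z powr (\<alpha> - 1)"
    by (subst norm_powr_real_powr') auto
  also have "\<dots> \<le> Re z powr (\<alpha> - 1)"
    using z \<alpha> complex_Re_le_cmod[of z] by (intro powr_mono2') auto
  finally show "norm (z powr (of_real \<alpha> - 1)) \<le> Re z powr (\<alpha> - 1)" .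
qed

theorem proposition3p8:
  fixes f :: "complex \<Rightarrow> complex" and \<alpha> \<beta> \<theta> :: real and l :: complex
    and g h :: "complex \<Rightarrow> complex"
  assumes "bernstein f"
    and "0 < \<alpha>" and "\<alpha> < 1"
    and "1 < \<beta>" and "\<beta> \<le> 1 / \<alpha>"
    and "0 < \<theta>" and "\<theta> < pi / 2"
    and "l \<noteq> 0" and "\<bar>Arg l\<bar> < \<theta>"
    and "\<And>z. g z = (f (z powr complex_of_real \<alpha>)) powr complex_of_real \<beta>"
    and "\<And>z. h z = 1 / (l + g z)"
  shows "in_B h \<and>
         B_norm h \<le> ennreal (2 * \<beta> / cos (\<alpha> * pi / 2)
                              / (cos ((\<alpha> * \<beta> * pi / 2 + \<theta>) / 2))\<^sup>2 / cmod l)"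
proof -
  note \<alpha> = assms(2,3) and \<beta> = assms(4,5) and \<theta> = assms(6,7) and l = assms(8,9)
    and gdef = assms(10) and hdef = assms(11)
  from assms(1) obtain a b \<mu> where ab: "0 \<le> a" "0 \<le> b" and sm: "sets \<mu> = sets borel"
    and fin: "(\<integral>\<^sup>+ s. ennreal (s / (1 + s)) * indicator {0<..} s \<partial>\<mu>) < \<infinity>"
    and feq0: "\<And>z. 0 < Re z \<Longrightarrow> f z = complex_of_real a + complex_of_real b * z
               + (LINT s:{0<..}|\<mu>. (1 - exp (- (z * complex_of_real s))))"
    unfolding bernstein_def by blast
  interpret bern a b \<mu> using ab sm fin by unfold_locales
  have feq: "\<And>z. 0 < Re z \<Longrightarrow> f z = F z" using feq0 F_eq by simp

  define \<phi> where "\<phi> = \<alpha> * pi / 2"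
  define \<gamma> where "\<gamma> = \<beta> * \<phi>"
  define \<kappa> where "\<kappa> = cos \<phi>"
  define c where "c = cos ((\<gamma> + \<theta>) / 2)"
  define L where "L = cmod l"
  have apl: "\<alpha> * pi < 1 * pi" using \<alpha> by (intro mult_strict_right_mono) auto
  have \<phi>0: "0 < \<phi>" using \<alpha> by (simp add: \<phi>_def)
  have \<phi>1: "\<phi> < pi / 2" using apl by (simp add: \<phi>_def)
  have \<kappa>0: "0 < \<kappa>" unfolding \<kappa>_def using \<phi>0 \<phi>1 by (intro cos_gt_zero) auto
  have \<kappa>1: "\<kappa> \<le> 1" by (simp add: \<kappa>_def)
  have s\<phi>: "0 \<le> sin \<phi>" using \<phi>0 \<phi>1 by (intro sin_ge_zero) auto
  have ab1: "\<beta> * \<alpha> \<le> 1" using \<beta> \<alpha> by (simp add: le_divide_eq mult.commute)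
  have \<gamma>1: "\<gamma> \<le> pi / 2"
  proof -
    have "\<gamma> = (\<beta> * \<alpha>) * (pi / 2)" by (simp add: \<gamma>_def \<phi>_def)
    also have "\<dots> \<le> 1 * (pi / 2)" using ab1 by (intro mult_right_mono) auto
    finally show ?thesis by simp
  qed
  have \<gamma>0: "0 \<le> \<gamma>" using \<phi>0 \<beta> by (simp add: \<gamma>_def)
  have c0: "0 < c" unfolding c_def using \<gamma>0 \<gamma>1 \<theta> by (intro cos_gt_zero) auto
  have c1: "c \<le> 1" by (simp add: c_def)
  have L0: "0 < L" using l by (simp add: L_def)
  have Cform: "2 * \<beta> / cos (\<alpha> * pi / 2) / (cos ((\<alpha> * \<beta> * pi / 2 + \<theta>) / 2))\<^sup>2 / cmod l
      = 2 * \<beta> / \<kappa> / c^2 / L"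
  proof -
    have "\<alpha> * \<beta> * pi / 2 = \<gamma>" by (simp add: \<gamma>_def \<phi>_def)
    thus ?thesis by (simp add: \<kappa>_def \<phi>_def c_def L_def)
  qed
  have Zpos: "\<And>w. 0 < Re w \<Longrightarrow> 0 < Re (w powr of_real \<alpha>)"
  proof -
    fix w :: complex assume w: "0 < Re w"
    have "0 < \<kappa> * Re w powr \<alpha>" using \<kappa>0 w by simp
    also have "\<dots> \<le> Re (w powr of_real \<alpha>)" using powr_facts(3)[OF w \<alpha>] by (simp add: \<kappa>_def \<phi>_def)
    finally show "0 < Re (w powr of_real \<alpha>)" .
  qed
  have gF: "\<And>w. 0 < Re w \<Longrightarrow> g w = F (w powr of_real \<alpha>) powr of_real \<beta>"
    using gdef feq Zpos by simp
  have openC: "open {w::complex. 0 < Re w}" by (rule open_halfspace_Re_gt)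
  have main: "in_B h \<and> B_norm h \<le> ennreal (2 * \<beta> / \<kappa> / c^2 / L)"
  proof (cases "\<forall>t>0. 0 < fr t")
    case False
    hence zero: "\<And>w. 0 < Re w \<Longrightarrow> F w = 0" using dichotomy by blast
    have hz: "\<And>w. 0 < Re w \<Longrightarrow> h w = 1 / l"
      using hdef gF zero Zpos by simp
    have hder: "(h has_field_derivative 0) (at z)" if z: "0 < Re z" for z
      by (rule has_field_derivative_transform_within_open[OF DERIV_const[of "1 / l"] openC])
         (use z hz in auto)
    show ?thesis
    proof (rule finish_lemma[of h "\<lambda>z. 0" "1 / L" 0, OF hder])
      show "norm (h z) \<le> 1 / L" if "0 < Re z" for z using hz[OF that] by (simp add: L_def norm_divide)
      show "B_int h \<le> ennreal 0"
      proof (rule B_int_bound[where v = "\<lambda>x. 0"])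
        show "norm (deriv h (Complex x y)) \<le> 0" if "0 < x" for x y
          using DERIV_imp_deriv[OF hder, of "Complex x y"] that by simp
      qed simp
      have "\<kappa> * c^2 \<le> 1 * 1" using \<kappa>0 \<kappa>1 c0 c1 by (intro mult_mono) (auto simp: power_le_one)
      hence "1 / L \<le> 2 * \<beta> / \<kappa> / c^2 / L" using \<beta> \<kappa>0 c0 L0
        by (simp add: divide_simps)
      thus "1 / L + 0 \<le> 2 * \<beta> / \<kappa> / c^2 / L" by simp
    qed (use L0 in auto)
  next
    case True
    hence pos: "\<And>t. 0 < t \<Longrightarrow> 0 < fr t" by blast
    define K where "K = \<beta> / (\<kappa> * c^2)"
    define Fr where "Fr x = fr (\<kappa> * x powr \<alpha>)" for x
    define DFr where "DFr x = fr1 (\<kappa> * x powr \<alpha>) * (\<kappa> * (\<alpha> * x powr (\<alpha> - 1)))" for x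
    define u where "u x = DFr x * (L + Fr x powr \<beta>) powr (-1 - 1/\<beta>)" for x
    define hd where "hd z = - (of_real \<beta> * F (z powr of_real \<alpha>) powr (of_real \<beta> - 1)
        * (F1 (z powr of_real \<alpha>) * (of_real \<alpha> * z powr (of_real \<alpha> - 1))))
        / (l + F (z powr of_real \<alpha>) powr of_real \<beta>)^2" for z
    have K0: "0 < K" using \<beta> \<kappa>0 c0 by (simp add: K_def)
    have pt: "(h has_field_derivative hd z) (at z) \<and> norm (h z) \<le> 1 / (c * L)
              \<and> norm (hd z) \<le> K * u (Re z)" if z: "0 < Re z" for z
    proof -
      define x where "x = Re z"
      define Z where "Z = z powr of_real \<alpha>"
      define W where "W = F Z"
      define G where "G = W powr of_real \<beta>"
      define T where "T = Fr x"
      have x0: "0 < x" using z by (simp add: x_def)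
      note pf = powr_facts[OF z \<alpha>]
      have Z0: "Z \<noteq> 0" using pf(1) by (simp add: Z_def)
      have ArgZ: "\<bar>Arg Z\<bar> \<le> \<phi>" using pf(2) by (simp add: Z_def \<phi>_def)
      have ReZ: "\<kappa> * x powr \<alpha> \<le> Re Z" using pf(3) by (simp add: Z_def x_def \<kappa>_def \<phi>_def)
      have xa: "0 < \<kappa> * x powr \<alpha>" using \<kappa>0 x0 by simp
      have ReZ0: "0 < Re Z" using xa ReZ by linarith
      have sZ: "sect \<phi> Z" using sect_Arg[of \<phi> Z] \<phi>0 \<phi>1 Z0 ArgZ by simp
      have sW: "sect \<phi> W" unfolding W_def
        by (rule F_sect[OF sZ ReZ0]) (use \<kappa>0 s\<phi> in \<open>auto simp: \<kappa>_def\<close>)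
      have T0: "0 < T" using pos[OF xa] by (simp add: T_def Fr_def)
      have TW: "T \<le> Re W"
      proof -
        have "T \<le> fr (Re Z)" unfolding T_def Fr_def by (rule fr_mono[OF xa ReZ])
        also have "\<dots> \<le> Re W" unfolding W_def by (rule fr_le_ReF[OF ReZ0])
        finally show ?thesis .
      qed
      have ReW0: "0 < Re W" using T0 TW by linarith
      have W0: "W \<noteq> 0" using ReW0 by auto
      have TnW: "T \<le> norm W" using TW complex_Re_le_cmod[of W] by linarith
      have ArgW: "\<bar>Arg W\<bar> \<le> \<phi>" using sect_Arg[of \<phi> W] \<phi>0 \<phi>1 W0 sW by simp
      have bAW: "\<bar>\<beta> * Arg W\<bar> \<le> \<gamma>" using ArgW \<beta> by (simp add: \<gamma>_def abs_mult mult_left_mono)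
      have bA: "-pi < \<beta> * Arg W" "\<beta> * Arg W \<le> pi" using bAW \<gamma>1 pi_gt_zero unfolding abs_le_iff by linarith+
      note gp = Arg_powr[OF W0 bA]
      have ArgG: "\<bar>Arg G\<bar> \<le> \<gamma>" using gp(1) bAW by (simp add: G_def)
      have nG: "norm G = norm W powr \<beta>" using gp(2) by (simp add: G_def)
      have lower: "c * (L + norm G) \<le> norm (l + G)"
        using sum_lower[of l \<theta> G \<gamma>] l \<theta> \<gamma>0 \<gamma>1 ArgG
        by (simp add: c_def L_def add.commute)
      have lG: "0 < norm (l + G)"
      proof -
        have "0 < c * (L + norm G)" using c0 L0 by (intro mult_pos_pos add_pos_nonneg) auto
        thus ?thesis using lower by linarith
      qed
      have lG0: "l + G \<noteq> 0" using lG by auto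
      have gz: "g z = G" using gF[OF z] by (simp add: G_def W_def Z_def)
      have hz: "h z = 1 / (l + G)" using hdef gz by simp
      have nh: "norm (h z) \<le> 1 / (c * L)"
      proof -
        have "c * L \<le> c * (L + norm G)" using c0 by (intro mult_left_mono) auto
        also have "\<dots> \<le> norm (l + G)" by (rule lower)
        finally have "c * L \<le> norm (l + G)" .
        hence "1 / norm (l + G) \<le> 1 / (c * L)" using c0 L0 lG by (intro divide_left_mono) auto
        thus ?thesis by (simp add: hz norm_divide)
      qed
      have d3: "((\<lambda>z. F (z powr of_real \<alpha>)) has_field_derivative F1 Z * (of_real \<alpha> * z powr (of_real \<alpha> - 1))) (at z)"
        using DERIV_chain2[OF F_deriv[OF ReZ0[unfolded Z_def]] pf(4)] by (simp add: Z_def)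
      have Wnp: "W \<notin> \<real>\<^sub>\<le>\<^sub>0" using ReW0 by (auto simp: complex_nonpos_Reals_iff)
      have d5: "((\<lambda>z. F (z powr of_real \<alpha>) powr of_real \<beta>) has_field_derivative
          of_real \<beta> * W powr (of_real \<beta> - 1) * (F1 Z * (of_real \<alpha> * z powr (of_real \<alpha> - 1)))) (at z)"
        using DERIV_chain2[OF has_field_derivative_powr[OF Wnp[unfolded W_def Z_def]] d3[unfolded Z_def]]
        by (simp add: W_def Z_def)
      have d6: "((\<lambda>z. l + F (z powr of_real \<alpha>) powr of_real \<beta>) has_field_derivative
          0 + of_real \<beta> * W powr (of_real \<beta> - 1) * (F1 Z * (of_real \<alpha> * z powr (of_real \<alpha> - 1)))) (at z)"
        by (rule DERIV_add[OF DERIV_const d5])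
      have d7: "((\<lambda>z. inverse (l + F (z powr of_real \<alpha>) powr of_real \<beta>)) has_field_derivative
          - ((0 + of_real \<beta> * W powr (of_real \<beta> - 1) * (F1 Z * (of_real \<alpha> * z powr (of_real \<alpha> - 1))))
             * inverse ((l + F (z powr of_real \<alpha>) powr of_real \<beta>) ^ Suc (Suc 0)))) (at z)"
        by (rule DERIV_inverse_fun[OF d6]) (use lG0 in \<open>simp add: G_def W_def Z_def\<close>)
      have d8: "((\<lambda>z. inverse (l + F (z powr of_real \<alpha>) powr of_real \<beta>)) has_field_derivative hd z) (at z)"
        using d7 by (simp add: hd_def W_def Z_def divide_inverse power2_eq_square)
      have hder: "(h has_field_derivative hd z) (at z)"
      proof (rule has_field_derivative_transform_within_open[OF d8 openC])
        show "z \<in> {w. 0 < Re w}" using z by simp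
        fix w :: complex assume "w \<in> {w. 0 < Re w}"
        hence w: "0 < Re w" by simp
        show "inverse (l + F (w powr of_real \<alpha>) powr of_real \<beta>) = h w"
          using hdef gF[OF w] by (simp add: divide_inverse)
      qed
      have nhd: "norm (hd z) \<le> K * u x"
      proof -
        define A where "A = norm W powr (\<beta> - 1) / (L + norm W powr \<beta>)^2"
        have A_le: "A \<le> (L + T powr \<beta>) powr (-1 - 1/\<beta>)"
          unfolding A_def by (rule key_ineq[OF T0 TnW L0 \<beta>(1)])
        have N: "norm (hd z) = \<beta> * \<alpha> * norm (F1 Z) * norm (z powr (of_real \<alpha> - 1))
            * norm W powr (\<beta> - 1) / (norm (l + G))^2"
        proof -
          have "norm (W powr (of_real \<beta> - 1)) = norm W powr (\<beta> - 1)"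
            by (subst norm_powr_real_powr') auto
          thus ?thesis using \<alpha> \<beta>
            by (simp add: hd_def norm_mult norm_divide norm_power G_def W_def Z_def)
        qed
        have F1b: "norm (F1 Z) \<le> fr1 (\<kappa> * x powr \<alpha>)"
          using F1_bound[OF ReZ0] fr1_anti[OF xa ReZ] by linarith
        have zb: "norm (z powr (of_real \<alpha> - 1)) \<le> x powr (\<alpha> - 1)" using pf(5) by (simp add: x_def)
        have den: "c^2 * (L + norm W powr \<beta>)^2 \<le> (norm (l + G))^2"
        proof -
          have "(c * (L + norm G))^2 \<le> (norm (l + G))^2"
            using lower c0 L0 by (intro power_mono) auto
          thus ?thesis by (simp add: nG power_mult_distrib)
        qed
        have den0: "0 < c^2 * (L + norm W powr \<beta>)^2"
        proof -
          have p: "0 < L + norm W powr \<beta>" using L0 by (intro add_pos_nonneg) auto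
          show ?thesis using c0 p by simp
        qed
        have "norm (hd z) \<le> \<beta> * \<alpha> * fr1 (\<kappa> * x powr \<alpha>) * x powr (\<alpha> - 1) * norm W powr (\<beta> - 1)
            / (c^2 * (L + norm W powr \<beta>)^2)"
          unfolding N
        proof (rule frac_le)
          show "0 \<le> \<beta> * \<alpha> * fr1 (\<kappa> * x powr \<alpha>) * x powr (\<alpha> - 1) * norm W powr (\<beta> - 1)"
            using \<alpha> \<beta> fr1_nonneg[OF xa] by simp
          show "\<beta> * \<alpha> * norm (F1 Z) * norm (z powr (of_real \<alpha> - 1)) * norm W powr (\<beta> - 1)
              \<le> \<beta> * \<alpha> * fr1 (\<kappa> * x powr \<alpha>) * x powr (\<alpha> - 1) * norm W powr (\<beta> - 1)"
            using \<alpha> \<beta> F1b zb fr1_nonneg[OF xa] by (intro mult_right_mono mult_left_mono mult_mono) auto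
        qed (use den den0 in auto)
        also have "\<dots> = (\<beta> * \<alpha> * fr1 (\<kappa> * x powr \<alpha>) * x powr (\<alpha> - 1) / c^2) * A"
          by (simp add: A_def)
        also have "\<dots> \<le> (\<beta> * \<alpha> * fr1 (\<kappa> * x powr \<alpha>) * x powr (\<alpha> - 1) / c^2) * (L + T powr \<beta>) powr (-1 - 1/\<beta>)"
          using A_le \<alpha> \<beta> fr1_nonneg[OF xa] by (intro mult_left_mono) auto
        also have "\<dots> = K * u x"
          using \<kappa>0 by (simp add: K_def u_def DFr_def T_def)
        finally show ?thesis .
      qed
      show ?thesis using hder nh nhd by (simp add: x_def)
    qed
    have Fr_deriv: "(Fr has_real_derivative DFr x) (at x)" if x: "0 < x" for x
    proof -
      have xa: "0 < \<kappa> * x powr \<alpha>" using \<kappa>0 x by simp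
      have d: "((\<lambda>x. \<kappa> * x powr \<alpha>) has_real_derivative \<kappa> * (\<alpha> * x powr (\<alpha> - 1))) (at x)"
        by (rule DERIV_cmult[OF has_real_derivative_powr[OF x]])
      show ?thesis using DERIV_chain2[OF fr_deriv[OF xa] d] by (simp add: Fr_def[abs_def] DFr_def)
    qed
    have Fr_pos: "0 < Fr x" if "0 < x" for x using pos \<kappa>0 that by (simp add: Fr_def)
    have DFr_nn: "0 \<le> DFr x" if x: "0 < x" for x
    proof -
      have "0 \<le> fr1 (\<kappa> * x powr \<alpha>)" using \<kappa>0 x by (intro fr1_nonneg) simp
      thus ?thesis using \<kappa>0 \<alpha> x by (simp add: DFr_def)
    qed
    have cont_pow: "continuous_on {0<..} (\<lambda>x::real. \<kappa> * x powr \<alpha>)"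
      by (intro continuous_intros) auto
    have DFr_cont: "continuous_on {0<..} DFr"
    proof -
      have "continuous_on {0<..} (\<lambda>x. fr1 (\<kappa> * x powr \<alpha>))"
        by (rule continuous_on_compose2[OF fr1_cont cont_pow]) (use \<kappa>0 in auto)
      moreover have "continuous_on {0<..} (\<lambda>x::real. \<kappa> * (\<alpha> * x powr (\<alpha> - 1)))"
        by (intro continuous_intros) auto
      ultimately show ?thesis unfolding DFr_def[abs_def] by (intro continuous_intros) auto
    qed
    have Fr_cont: "continuous_on {0<..} Fr"
      by (rule DERIV_continuous_on[where D = DFr]) (auto intro: has_field_derivative_at_within Fr_deriv)
    have P0: "0 < L + Fr x powr \<beta>" if "0 < x" for x using L0 by (intro add_pos_nonneg) auto
    have u_cont: "continuous_on {0<..} (\<lambda>x. K * u x)"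
      unfolding u_def[abs_def] using P0 Fr_pos
      by (intro continuous_intros DFr_cont Fr_cont) (auto simp: less_imp_neq[symmetric] dest: P0)
    have u_nn: "0 \<le> K * u x" if "0 < x" for x
      using K0 DFr_nn[OF that] by (simp add: u_def)
    define Q where "Q x = K * (Fr x * (L + Fr x powr \<beta>) powr (-1/\<beta>) / L)" for x
    have Qd: "(Q has_real_derivative K * u x) (at x)" if x: "0 < x" for x
    proof -
      have "((\<lambda>x. Fr x * (L + Fr x powr \<beta>) powr (-1/\<beta>)) has_real_derivative
          L * (DFr x * (L + Fr x powr \<beta>) powr (-1 - 1/\<beta>))) (at x)"
        by (rule Phi_deriv[OF L0 _ Fr_pos[OF x] Fr_deriv[OF x]]) (use \<beta> in simp)
      hence "((\<lambda>x. K * (Fr x * (L + Fr x powr \<beta>) powr (-1/\<beta>) / L)) has_real_derivative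
          K * (L * (DFr x * (L + Fr x powr \<beta>) powr (-1 - 1/\<beta>)) / L)) (at x)"
        by (intro DERIV_cmult DERIV_cdivide)
      thus ?thesis using L0 by (simp add: Q_def[abs_def] u_def)
    qed
    have Qb: "0 \<le> Q x \<and> Q x \<le> K / L" if x: "0 < x" for x
    proof -
      note pb = Phi_bounds[of "Fr x" L \<beta>]
      have a1: "0 \<le> Fr x * (L + Fr x powr \<beta>) powr (-1/\<beta>)"
        and a2: "Fr x * (L + Fr x powr \<beta>) powr (-1/\<beta>) \<le> 1"
        using pb Fr_pos[OF x] L0 \<beta> by auto
      have "0 \<le> K * (Fr x * (L + Fr x powr \<beta>) powr (-1/\<beta>) / L)" using a1 K0 L0 by simp
      moreover have "K * (Fr x * (L + Fr x powr \<beta>) powr (-1/\<beta>) / L) \<le> K * (1 / L)"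
        using a2 K0 L0 by (intro mult_left_mono divide_right_mono) auto
      ultimately show ?thesis by (simp add: Q_def)
    qed
    have int: "(\<integral>\<^sup>+x. ennreal (indicator {0<..} x * (K * u x)) \<partial>lborel) \<le> ennreal (K / L)"
      by (rule FTC_bound[OF Qd u_nn u_cont Qb])
    have bint: "B_int h \<le> ennreal (K / L)"
    proof (rule B_int_bound[OF _ int])
      fix x y :: real assume x: "0 < x"
      have "deriv h (Complex x y) = hd (Complex x y)" using pt[of "Complex x y"] x by (auto intro: DERIV_imp_deriv)
      thus "norm (deriv h (Complex x y)) \<le> K * u x" using pt[of "Complex x y"] x by simp
    qed
    show ?thesis
    proof (rule finish_lemma[of h hd "1 / (c * L)" "K / L"])
      show "(h has_field_derivative hd z) (at z)" if "0 < Re z" for z using pt[OF that] by blast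
      show "norm (h z) \<le> 1 / (c * L)" if "0 < Re z" for z using pt[OF that] by blast
      show "B_int h \<le> ennreal (K / L)" by (rule bint)
      show "0 \<le> 1 / (c * L)" using c0 L0 by simp
      show "0 \<le> K / L" using K0 L0 by simp
      show "1 / (c * L) + K / L \<le> 2 * \<beta> / \<kappa> / c^2 / L"
      proof -
        have "\<kappa> * c \<le> 1 * 1" using \<kappa>0 \<kappa>1 c0 c1 by (intro mult_mono) auto
        hence kc: "\<kappa> * c \<le> \<beta>" using \<beta> by simp
        have "1 / (c * L) = (\<kappa> * c) / (\<kappa> * c^2 * L)" using \<kappa>0 c0 L0 by (simp add: field_simps power2_eq_square)
        also have "\<dots> \<le> \<beta> / (\<kappa> * c^2 * L)" using kc \<kappa>0 c0 L0 by (intro divide_right_mono) auto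
        also have "\<dots> = K / L" by (simp add: K_def)
        finally have "1 / (c * L) \<le> K / L" .
        hence "1 / (c * L) + K / L \<le> 2 * (K / L)" by simp
        also have "\<dots> = 2 * \<beta> / \<kappa> / c^2 / L" by (simp add: K_def field_simps)
        finally show ?thesis .
      qed
    qed
  qed
  thus ?thesis unfolding Cform .
qed

end
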